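(* In the setting below: (i) For every ordinal $\alpha\geq0$, if $x\in M_{\alpha+1}$ then $\mathcal{P}(x)\cap M\in M_{\alpha+2}$. (ii) For every ordinal $\alpha\geq1$, if $x\in M$ and $x\subseteq M_\alpha$, then $x\in M_{\alpha+1}$.
   Context: Work in ZFA (ZF with a set $A$ of atoms, i.e. urelements that have no elements), extended by a primitive binary relation $\preccurlyeq$ on $A$, with Separation and Replacement holding for formulas mentioning $\preccurlyeq$. $A$ is an infinite set of atoms and $\preccurlyeq$ is a pre-ordering (reflexive, transitive) on $A$ with no minimal elements: for every $a\in A$ there is $b\in A$ with $b\preccurlyeq a$ and not $a\preccurlyeq b$. For $a\in A$, $pr(a)=\{b\in A:b\preccurlyeq a\}$; $LO(A,\preccurlyeq)$ is the set of nonempty $x\subseteq A$ with $pr(a)\subseteq x$ for all $a\in x$. For a set $X$ of sets, $LO(X,\subseteq)$ is the set of nonempty $x\subseteq X$ such that for every $y\in x$ and every $z\in X$ with $z\subseteq y$, $z\in x$. The magmatic hierarchy: $M_1=LO(A,\preccurlyeq)$; $M_{\alpha+1}=LO(M_\alpha,\subseteq)$ for $\alpha\geq1$; $M_\alpha=\bigcup_{1\leq\beta<\alpha}M_\beta$ for limit $\alpha$; $M=\bigcup_{\alpha\geq1}M_\alpha$. *)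

theory Defs
  imports Main
begin

text \<open>
  A ZFA-style universe is modelled by a HOL type 'v together with a membership
  map elts (elts x = the set of members of x) and a set A of atoms.
  Ordinals are modelled by an arbitrary well-ordered index type 'o without greatest element.
\<close>

definition ozero :: "'o::wellorder" where
  "ozero = (LEAST a. True)"

definition onext :: "'o::wellorder \<Rightarrow> 'o" where
  "onext a = (LEAST b. a < b)"

definition olimit :: "'o::wellorder \<Rightarrow> bool" where
  "olimit l \<longleftrightarrow> ozero < l \<and> (\<forall>b<l. \<exists>c. b < c \<and> c < l)"

definition pr :: "'v set \<Rightarrow> ('v \<Rightarrow> 'v \<Rightarrow> bool) \<Rightarrow> 'v \<Rightarrow> 'v set" where
  "pr A le a = {b \<in> A. le b a}"

definition LO_atoms :: "('v \<Rightarrow> 'v set) \<Rightarrow> 'v set \<Rightarrow> ('v \<Rightarrow> 'v \<Rightarrow> bool) \<Rightarrow> 'v set" where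
  "LO_atoms elts A le =
     {x. x \<notin> A \<and> elts x \<noteq> {} \<and> elts x \<subseteq> A \<and> (\<forall>a\<in>elts x. pr A le a \<subseteq> elts x)}"

definition LO_sub :: "('v \<Rightarrow> 'v set) \<Rightarrow> 'v set \<Rightarrow> 'v set \<Rightarrow> 'v set" where
  "LO_sub elts A X =
     {x. x \<notin> A \<and> elts x \<noteq> {} \<and> elts x \<subseteq> X \<and>
         (\<forall>y\<in>elts x. \<forall>z\<in>X. elts z \<subseteq> elts y \<longrightarrow> z \<in> elts x)}"

text \<open>Mh is the magmatic hierarchy: Mh (onext ozero) = M_1 etc.; index ozero carries the empty set (M_0 is not used).\<close>
definition magmatic :: "('v \<Rightarrow> 'v set) \<Rightarrow> 'v set \<Rightarrow> ('v \<Rightarrow> 'v \<Rightarrow> bool) \<Rightarrow> ('o::wellorder \<Rightarrow> 'v set) \<Rightarrow> bool" where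
  "magmatic elts A le Mh \<longleftrightarrow>
     Mh ozero = {} \<and>
     Mh (onext ozero) = LO_atoms elts A le \<and>
     (\<forall>a. ozero < a \<longrightarrow> Mh (onext a) = LO_sub elts A (Mh a)) \<and>
     (\<forall>l. olimit l \<longrightarrow> Mh l = (\<Union>b\<in>{b. ozero < b \<and> b < l}. Mh b))"

definition Mall :: "('o::wellorder \<Rightarrow> 'v set) \<Rightarrow> 'v set" where
  "Mall Mh = (\<Union>a\<in>{a. ozero < a}. Mh a)"

end

theory Submission
  imports Defs
begin

locale mag =
  fixes elts :: "'v \<Rightarrow> 'v set" and A :: "'v set" and le :: "'v \<Rightarrow> 'v \<Rightarrow> bool"
    and Mh :: "'o::wellorder \<Rightarrow> 'v set"
  assumes no_top: "\<forall>a::'o. \<exists>b. a < b"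
    and hier: "magmatic elts A le Mh"
begin

lemma onext_gt: "(a::'o) < onext a"
  proof -
  obtain b where "a < b" using no_top by blast
  then show ?thesis unfolding onext_def by (rule LeastI)
qed

lemma onext_le: "(a::'o) < b \<Longrightarrow> onext a \<le> b"
  unfolding onext_def by (rule Least_le)

lemma ozero_le: "ozero \<le> (a::'o)"
  unfolding ozero_def by (rule Least_le) simp

lemma ozero_less_onext: "ozero < onext (a::'o)"
  using ozero_le onext_gt by (rule le_less_trans)

lemma decomp: "(a::'o) = ozero \<or> a = onext ozero \<or> (\<exists>b. ozero < b \<and> a = onext b) \<or> olimit a"
proof -
  { assume h: "a \<noteq> ozero" "\<not> olimit a"
    then have pos: "ozero < a" using ozero_le order.not_eq_order_implies_strict by metis
    with h obtain b where b: "b < a" "\<not> (\<exists>c. b < c \<and> c < a)" unfolding olimit_def by blast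
    have "onext b \<le> a" using b onext_le by blast
    moreover have "\<not> onext b < a" using b onext_gt by blast
    ultimately have "a = onext b" by simp
    moreover have "b = ozero \<or> ozero < b" using ozero_le[of b] by auto
    ultimately have "a = onext ozero \<or> (\<exists>b. ozero < b \<and> a = onext b)" by blast }
  then show ?thesis by blast
qed

lemma M0: "Mh ozero = {}" using hier unfolding magmatic_def by blast
lemma M1: "Mh (onext ozero) = LO_atoms elts A le" using hier unfolding magmatic_def by blast
lemma Msuc: "ozero < b \<Longrightarrow> Mh (onext b) = LO_sub elts A (Mh b)"
  using hier unfolding magmatic_def by blast
lemma Mlim: "olimit l \<Longrightarrow> Mh l = (\<Union>b\<in>{b. ozero < b \<and> b < l}. Mh b)"
  using hier unfolding magmatic_def by blast

lemma basic: "ozero < a \<Longrightarrow> x \<in> Mh a \<Longrightarrow> x \<notin> A \<and> elts x \<noteq> {}"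
proof (induction a arbitrary: x rule: less_induct)
  case (less a)
  from decomp[of a] show ?case
  proof (elim disjE exE conjE)
    assume "a = ozero" then show ?thesis using less by simp
  next
    assume "a = onext ozero" then show ?thesis using less M1 unfolding LO_atoms_def by auto
  next
    fix b assume "ozero < b" "a = onext b" then show ?thesis using less Msuc unfolding LO_sub_def by auto
  next
    assume "olimit a"
    then obtain b where "ozero < b" "b < a" "x \<in> Mh b" using Mlim less by auto
    then show ?thesis using less by blast
  qed
qed

lemma level: "ozero < a \<Longrightarrow> x \<in> Mh a \<Longrightarrow> x \<in> Mh (onext ozero) \<or> (\<exists>b. ozero < b \<and> x \<in> Mh (onext b))"
proof (induction a rule: less_induct)
  case (less a)
  from decomp[of a] show ?case
  proof (elim disjE exE conjE)
    assume "a = ozero" then show ?thesis using less by simp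
  next
    assume "a = onext ozero" then show ?thesis using less by auto
  next
    fix b assume "ozero < b" "a = onext b" then show ?thesis using less by auto
  next
    assume "olimit a"
    then obtain b where "ozero < b" "b < a" "x \<in> Mh b" using Mlim less by auto
    then show ?thesis using less by blast
  qed
qed

lemma M1_sub: "x \<in> Mh (onext ozero) \<Longrightarrow> elts x \<subseteq> A"
  using M1 unfolding LO_atoms_def by auto

lemma Msuc_sub: "ozero < b \<Longrightarrow> x \<in> Mh (onext b) \<Longrightarrow> elts x \<subseteq> Mh b"
  using Msuc unfolding LO_sub_def by auto

lemma Msuc_dc: "ozero < b \<Longrightarrow> x \<in> Mh (onext b) \<Longrightarrow> y \<in> elts x \<Longrightarrow> z \<in> Mh b \<Longrightarrow> elts z \<subseteq> elts y \<Longrightarrow> z \<in> elts x"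
  using Msuc unfolding LO_sub_def by auto

lemma disj1: "ozero < b \<Longrightarrow> x \<in> Mh b \<Longrightarrow> elts x \<subseteq> A \<Longrightarrow> elts x \<subseteq> Mh c \<Longrightarrow> ozero < c \<Longrightarrow> False"
  using basic by (metis basic subset_iff equals0I)

lemma in_M: "x \<in> Mall Mh \<longleftrightarrow> (\<exists>a. ozero < a \<and> x \<in> Mh a)"
  unfolding Mall_def by auto

lemma key: "ozero < k \<Longrightarrow> w \<in> Mh k \<Longrightarrow> ozero < e \<Longrightarrow> w \<in> Mh e \<Longrightarrow> u \<in> Mall Mh \<Longrightarrow> elts u \<subseteq> elts w \<Longrightarrow> u \<in> Mh e"
proof (induction k arbitrary: w e u rule: less_induct)
  case (less k)
  note outerIH = less.IH
  show ?case
  proof (cases "olimit k")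
    case True
    then obtain b where "ozero < b" "b < k" "w \<in> Mh b" using Mlim less.prems by auto
    then show ?thesis using less.IH[of b w e u] less.prems by blast
  next
    case notlim: False
    have kcases: "k = onext ozero \<or> (\<exists>b. ozero < b \<and> k = onext b)"
      using decomp[of k] notlim less.prems by auto
    show ?thesis using less.prems
    proof (induction e arbitrary: w u rule: less_induct)
      case (less e)
      from decomp[of e] show ?case
      proof (elim disjE exE conjE)
        assume "e = ozero" then show ?thesis using less.prems M0 by simp
      next
        assume e1: "e = onext ozero"
        obtain s where s: "ozero < s" "u \<in> Mh s" using less.prems(5) unfolding in_M by blast
        from level[OF s] show ?thesis
        proof (elim disjE exE conjE)
          assume "u \<in> Mh (onext ozero)" then show ?thesis using e1 by simp
        next
          fix r assume r: "ozero < r" "u \<in> Mh (onext r)"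
          have "elts u \<subseteq> A" using less.prems e1 M1_sub by blast
          then show ?thesis using disj1[OF ozero_less_onext r(2)] Msuc_sub[OF r] r(1) by blast
        qed
      next
        fix h assume h: "ozero < h" "e = onext h"
        obtain s where s: "ozero < s" "u \<in> Mh s" using less.prems(5) unfolding in_M by blast
        have wsub: "elts w \<subseteq> Mh h" using Msuc_sub h less.prems by blast
        have ub: "u \<notin> A \<and> elts u \<noteq> {}" using basic s by blast
        have usub: "elts u \<subseteq> Mh h" using wsub less.prems by blast
        obtain s where s: "ozero < s" "u \<in> Mh s" using less.prems(5) unfolding in_M by blast
        from level[OF s] show ?thesis
        proof (elim disjE exE conjE)
          assume "u \<in> Mh (onext ozero)"
          then show ?thesis using disj1[OF ozero_less_onext _ M1_sub usub h(1)] by blast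
        next
          fix r assume r: "ozero < r" "u \<in> Mh (onext r)"
          have "\<forall>v\<in>elts u. \<forall>t\<in>Mh h. elts t \<subseteq> elts v \<longrightarrow> t \<in> elts u"
          proof (intro ballI impI)
            fix v t assume v: "v \<in> elts u" and t: "t \<in> Mh h" "elts t \<subseteq> elts v"
            have vr: "v \<in> Mh r" using Msuc_sub[OF r] v by blast
            have tM: "t \<in> Mall Mh" using t h in_M by blast
            from kcases have "t \<in> Mh r"
            proof (elim disjE exE conjE)
              assume "k = onext ozero"
              then have "elts w \<subseteq> A" using less.prems M1_sub by blast
              then show ?thesis using disj1[OF ozero_less_onext _ _ wsub h(1)] less.prems
                \<open>k = onext ozero\<close> by blast
            next
              fix k' assume k': "ozero < k'" "k = onext k'"
              have "v \<in> Mh k'" using Msuc_sub[OF k'(1)] k' less.prems v by blast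
              moreover have "k' < k" using k' onext_gt by simp
              ultimately show ?thesis using outerIH[of k' v r t] k' vr r tM t by blast
            qed
            then show "t \<in> elts u" using Msuc_dc[OF r v] t by blast
          qed
          then show ?thesis using Msuc[OF h(1)] h ub usub unfolding LO_sub_def by auto
        qed
      next
        assume lim: "olimit e"
        then obtain b where b: "ozero < b" "b < e" "w \<in> Mh b" using Mlim less.prems by auto
        then have "u \<in> Mh b" using less.IH[of b w u] less.prems by blast
        then show ?thesis using Mlim[OF lim] b by blast
      qed
    qed
  qed
qed


end

theorem corollary4p6:
  fixes elts :: "'v \<Rightarrow> 'v set" and A :: "'v set" and le :: "'v \<Rightarrow> 'v \<Rightarrow> bool"
    and Mh :: "'o::wellorder \<Rightarrow> 'v set"
  assumes atoms_empty: "\<forall>a\<in>A. elts a = {}"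
    and extensional: "\<forall>x y. x \<notin> A \<longrightarrow> y \<notin> A \<longrightarrow> elts x = elts y \<longrightarrow> x = y"
    and rich: "\<forall>a S. S \<subseteq> Mh a \<longrightarrow> (\<exists>x. x \<notin> A \<and> elts x = S)"
    and inf_A: "infinite A"
    and refl: "\<forall>a\<in>A. le a a"
    and trans: "\<forall>a\<in>A. \<forall>b\<in>A. \<forall>c\<in>A. le a b \<longrightarrow> le b c \<longrightarrow> le a c"
    and no_min: "\<forall>a\<in>A. \<exists>b\<in>A. le b a \<and> \<not> le a b"
    and no_top: "\<forall>a::'o. \<exists>b. a < b"
    and hier: "magmatic elts A le Mh"
  shows "(\<forall>a x. x \<in> Mh (onext a) \<longrightarrow>
            (\<exists>p\<in>Mh (onext (onext a)). elts p = {y \<in> Mall Mh. elts y \<subseteq> elts x}))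
       \<and> (\<forall>a x. ozero < a \<longrightarrow> x \<in> Mall Mh \<longrightarrow> elts x \<subseteq> Mh a \<longrightarrow> x \<in> Mh (onext a))"
proof -
  interpret mag elts A le Mh using no_top hier by unfold_locales
  have P1: "\<exists>p\<in>Mh (onext (onext a)). elts p = {y \<in> Mall Mh. elts y \<subseteq> elts x}"
    if x: "x \<in> Mh (onext a)" for a x
  proof -
    define S where "S = {y \<in> Mall Mh. elts y \<subseteq> elts x}"
    have pos: "ozero < onext a" by (rule ozero_less_onext)
    have SM: "S \<subseteq> Mh (onext a)" unfolding S_def using key[OF pos x pos x] by blast
    obtain p where p: "p \<notin> A" "elts p = S" using rich SM by blast
    have xM: "x \<in> Mall Mh" using in_M pos x by blast
    have "p \<in> LO_sub elts A (Mh (onext a))"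
      unfolding LO_sub_def using p SM xM pos in_M unfolding S_def by auto
    then show ?thesis using Msuc[OF pos] p S_def by auto
  qed
  have P2: "x \<in> Mh (onext a)" if a: "ozero < a" and xM: "x \<in> Mall Mh" and xs: "elts x \<subseteq> Mh a" for a x
  proof -
    obtain s where s: "ozero < s" "x \<in> Mh s" using xM in_M by blast
    have ub: "x \<notin> A \<and> elts x \<noteq> {}" using basic s by blast
    from level[OF s] show ?thesis
    proof (elim disjE exE conjE)
      assume "x \<in> Mh (onext ozero)"
      then show ?thesis using disj1[OF ozero_less_onext _ M1_sub xs a] by blast
    next
      fix r assume r: "ozero < r" "x \<in> Mh (onext r)"
      have "\<forall>y\<in>elts x. \<forall>z\<in>Mh a. elts z \<subseteq> elts y \<longrightarrow> z \<in> elts x"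
      proof (intro ballI impI)
        fix y z assume y: "y \<in> elts x" and z: "z \<in> Mh a" "elts z \<subseteq> elts y"
        have yr: "y \<in> Mh r" using Msuc_sub[OF r] y by blast
        have "z \<in> Mh r" using key[OF r(1) yr r(1) yr] z a in_M by blast
        then show "z \<in> elts x" using Msuc_dc[OF r y] z by blast
      qed
      then show ?thesis using Msuc[OF a] ub xs unfolding LO_sub_def by auto
    qed
  qed
  show ?thesis using P1 P2 by blast
qed

end
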